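(* Let $(X,\phi)$ be a flow on a compact metric space $(X,d)$. Then $$\overline{\mathrm{mdim}}_M(\phi,X,d)=\overline{\mathrm{mdim}}^B(\phi,X,d).$$
   Context: A flow: $\phi:X\times\mathbb{R}\to X$ continuous, $\phi_t(x)=\phi(x,t)$, $\phi_0=\mathrm{id}$, $\phi_{t+s}=\phi_t\circ\phi_s$. $d_t(x,y)=\max_{s\in[0,t]}d(\phi_sx,\phi_sy)$, $B_t(x,\epsilon,\phi)=\{y:d_t(x,y)<\epsilon\}$. $r_t(\phi,X,d,\epsilon)$ is the minimal cardinality of $E\subset X$ with every $x\in X$ satisfying $d_t(x,y)<\epsilon$ for some $y\in E$; $r(\phi,X,d,\epsilon)=\limsup_{t\to\infty}\frac1t\log r_t(\phi,X,d,\epsilon)$; $\overline{\mathrm{mdim}}_M(\phi,X,d)=\limsup_{\epsilon\to0}\frac{r(\phi,X,d,\epsilon)}{\log(1/\epsilon)}$. Bowen upper metric mean dimension of $Z\subset X$: for $\lambda\in\mathbb{R}$, $N\in\mathbb{N}$, $\epsilon>0$, $M(\phi,d,Z,\lambda,N,\epsilon)=\inf\sum_{i\in I}e^{-n_i\lambda}$ over finite or countable families $\{B_{n_i}(x_i,\epsilon,\phi)\}_{i\in I}$ covering $Z$ with $n_i\ge N$; $M(\phi,d,Z,\lambda,\epsilon)=\lim_{N\to\infty}M(\phi,d,Z,\lambda,N,\epsilon)$; $M(\phi,d,Z,\epsilon)=\inf\{\lambda:M(\phi,d,Z,\lambda,\epsilon)=0\}$; $\overline{\mathrm{mdim}}^B(\phi,Z,d)=\limsup_{\epsilon\to0}\frac{M(\phi,d,Z,\epsilon)}{\log(1/\epsilon)}$.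 *)

theory Defs
  imports "HOL-Analysis.Analysis"
begin

definition is_flow :: "'a set \<Rightarrow> ('a \<Rightarrow> 'a \<Rightarrow> real) \<Rightarrow> ('a \<Rightarrow> real \<Rightarrow> 'a) \<Rightarrow> bool" where
  "is_flow X d \<phi> \<longleftrightarrow>
     continuous_map (prod_topology (Metric_space.mtopology X d) euclideanreal)
                    (Metric_space.mtopology X d) (\<lambda>(x,t). \<phi> x t)
   \<and> (\<forall>x\<in>X. \<phi> x 0 = x)
   \<and> (\<forall>x\<in>X. \<forall>t s. \<phi> x (t + s) = \<phi> (\<phi> x s) t)"

definition bowen_dist :: "('a \<Rightarrow> 'a \<Rightarrow> real) \<Rightarrow> ('a \<Rightarrow> real \<Rightarrow> 'a) \<Rightarrow> real \<Rightarrow> 'a \<Rightarrow> 'a \<Rightarrow> real" where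
  "bowen_dist d \<phi> t x y = (SUP s\<in>{0..t}. d (\<phi> x s) (\<phi> y s))"

definition bowen_ball :: "'a set \<Rightarrow> ('a \<Rightarrow> 'a \<Rightarrow> real) \<Rightarrow> ('a \<Rightarrow> real \<Rightarrow> 'a) \<Rightarrow> real \<Rightarrow> 'a \<Rightarrow> real \<Rightarrow> 'a set" where
  "bowen_ball X d \<phi> t x \<epsilon> = {y\<in>X. bowen_dist d \<phi> t x y < \<epsilon>}"

definition span_num :: "'a set \<Rightarrow> ('a \<Rightarrow> 'a \<Rightarrow> real) \<Rightarrow> ('a \<Rightarrow> real \<Rightarrow> 'a) \<Rightarrow> real \<Rightarrow> real \<Rightarrow> nat" where
  "span_num X d \<phi> t \<epsilon> = Inf {card E | E. finite E \<and> E \<subseteq> X \<and>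
       (\<forall>x\<in>X. \<exists>y\<in>E. bowen_dist d \<phi> t x y < \<epsilon>)}"

definition span_rate :: "'a set \<Rightarrow> ('a \<Rightarrow> 'a \<Rightarrow> real) \<Rightarrow> ('a \<Rightarrow> real \<Rightarrow> 'a) \<Rightarrow> real \<Rightarrow> ereal" where
  "span_rate X d \<phi> \<epsilon> =
     Limsup at_top (\<lambda>t::real. ereal (ln (real (span_num X d \<phi> t \<epsilon>)) / t))"

definition upper_mdim_M :: "('a \<Rightarrow> real \<Rightarrow> 'a) \<Rightarrow> 'a set \<Rightarrow> ('a \<Rightarrow> 'a \<Rightarrow> real) \<Rightarrow> ereal" where
  "upper_mdim_M \<phi> X d =
     Limsup (at_right 0) (\<lambda>\<epsilon>. span_rate X d \<phi> \<epsilon> / ereal (ln (1 / \<epsilon>)))"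

definition bowen_M_N :: "'a set \<Rightarrow> ('a \<Rightarrow> real \<Rightarrow> 'a) \<Rightarrow> ('a \<Rightarrow> 'a \<Rightarrow> real) \<Rightarrow> 'a set
     \<Rightarrow> real \<Rightarrow> nat \<Rightarrow> real \<Rightarrow> ennreal" where
  "bowen_M_N X \<phi> d Z lam N \<epsilon> =
     (INF (I, x, n) \<in> {(I :: nat set, x :: nat \<Rightarrow> 'a, n :: nat \<Rightarrow> nat).
          (\<forall>i\<in>I. x i \<in> X \<and> n i \<ge> N) \<and> Z \<subseteq> (\<Union>i\<in>I. bowen_ball X d \<phi> (real (n i)) (x i) \<epsilon>)}.
        infsum (\<lambda>i. ennreal (exp (- real (n i) * lam))) I)"

definition bowen_M_lam :: "'a set \<Rightarrow> ('a \<Rightarrow> real \<Rightarrow> 'a) \<Rightarrow> ('a \<Rightarrow> 'a \<Rightarrow> real) \<Rightarrow> 'a set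
     \<Rightarrow> real \<Rightarrow> real \<Rightarrow> ennreal" where
  "bowen_M_lam X \<phi> d Z lam \<epsilon> = lim (\<lambda>N. bowen_M_N X \<phi> d Z lam N \<epsilon>)"

definition bowen_M :: "'a set \<Rightarrow> ('a \<Rightarrow> real \<Rightarrow> 'a) \<Rightarrow> ('a \<Rightarrow> 'a \<Rightarrow> real) \<Rightarrow> 'a set
     \<Rightarrow> real \<Rightarrow> ereal" where
  "bowen_M X \<phi> d Z \<epsilon> = Inf {ereal lam | lam. bowen_M_lam X \<phi> d Z lam \<epsilon> = 0}"

definition upper_mdim_B :: "'a set \<Rightarrow> ('a \<Rightarrow> real \<Rightarrow> 'a) \<Rightarrow> 'a set \<Rightarrow> ('a \<Rightarrow> 'a \<Rightarrow> real) \<Rightarrow> ereal" where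
  "upper_mdim_B X \<phi> Z d =
     Limsup (at_right 0) (\<lambda>\<epsilon>. bowen_M X \<phi> d Z \<epsilon> / ereal (ln (1 / \<epsilon>)))"

end

theory Submission imports Defs "HOL-Real_Asymp.Real_Asymp" begin

lemma count_words:
  fixes F :: "'i set" and n :: "'i \<Rightarrow> nat" and lam :: real
  assumes F: "finite F" and lam: "0 \<le> lam" and S: "(\<Sum>i\<in>F. exp (- real (n i) * lam)) \<le> 1"
  shows "real (card {w. set w \<subseteq> F \<and> length w = k \<and> real (sum_list (map n w)) \<le> L}) \<le> exp (L * lam)"
proof (induction k arbitrary: L)
  case 0
  show ?case
  proof (cases "0 \<le> L")
    case True
    then have "{w. set w \<subseteq> F \<and> length w = 0 \<and> real (sum_list (map n w)) \<le> L} = {[]}" by auto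
    moreover have "1 \<le> exp (L * lam)" using True lam by simp
    ultimately show ?thesis by simp
  next
    case False
    then have "{w. set w \<subseteq> F \<and> length w = 0 \<and> real (sum_list (map n w)) \<le> L} = {}" by auto
    then show ?thesis by simp
  qed
next
  case (Suc k)
  define A where "A L = {w. set w \<subseteq> F \<and> length w = k \<and> real (sum_list (map n w)) \<le> L}" for L
  have eq: "{w. set w \<subseteq> F \<and> length w = Suc k \<and> real (sum_list (map n w)) \<le> L}
      = (\<Union>i\<in>F. (Cons i) ` A (L - real (n i)))"
  proof (intro equalityI subsetI)
    fix w assume "w \<in> {w. set w \<subseteq> F \<and> length w = Suc k \<and> real (sum_list (map n w)) \<le> L}"
    then obtain i w' where "w = i # w'" "i \<in> F" "set w' \<subseteq> F" "length w' = k" "real (n i) + real (sum_list (map n w')) \<le> L"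
      by (cases w) auto
    then have "w' \<in> A (L - real (n i))" unfolding A_def by simp
    then show "w \<in> (\<Union>i\<in>F. (Cons i) ` A (L - real (n i)))" using \<open>i \<in> F\<close> \<open>w = i # w'\<close> by blast
  next
    fix w assume "w \<in> (\<Union>i\<in>F. (Cons i) ` A (L - real (n i)))"
    then show "w \<in> {w. set w \<subseteq> F \<and> length w = Suc k \<and> real (sum_list (map n w)) \<le> L}"
      unfolding A_def by auto
  qed
  have "card (\<Union>i\<in>F. (Cons i) ` A (L - real (n i))) \<le> (\<Sum>i\<in>F. card ((Cons i) ` A (L - real (n i))))"
    by (rule card_UN_le[OF F])
  also have "\<dots> = (\<Sum>i\<in>F. card (A (L - real (n i))))"
    by (intro sum.cong refl card_image) auto
  finally have "real (card (\<Union>i\<in>F. (Cons i) ` A (L - real (n i)))) \<le> real (\<Sum>i\<in>F. card (A (L - real (n i))))"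
    by (simp only: of_nat_le_iff)
  also have "\<dots> = (\<Sum>i\<in>F. real (card (A (L - real (n i)))))" by (rule of_nat_sum)
  also have "\<dots> \<le> (\<Sum>i\<in>F. exp ((L - real (n i)) * lam))"
    by (intro sum_mono) (use Suc.IH in \<open>simp add: A_def\<close>)
  also have "\<dots> = exp (L * lam) * (\<Sum>i\<in>F. exp (- real (n i) * lam))"
    by (simp add: sum_distrib_left exp_add[symmetric] algebra_simps)
  also have "\<dots> \<le> exp (L * lam)" using S by simp
  finally show ?case using eq by simp
qed

lemma interval_find:
  fixes f :: "nat \<Rightarrow> real"
  assumes "0 < K" "f 0 \<le> s" "s \<le> f K"
  shows "\<exists>j<K. f j \<le> s \<and> s \<le> f (Suc j)"
  using assms
proof (induction K)
  case 0 then show ?case by simp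
next
  case (Suc m)
  show ?case
  proof (cases "m > 0 \<and> s \<le> f m")
    case True
    then obtain j where "j < m" "f j \<le> s \<and> s \<le> f (Suc j)" using Suc.IH Suc.prems by blast
    then show ?thesis by (intro exI[of _ j]) auto
  next
    case False
    then have "m = 0 \<or> f m < s" by auto
    then show ?thesis using Suc.prems by (intro exI[of _ m]) auto
  qed
qed

locale cflow = Metric_space X d for X and d :: "'a \<Rightarrow> 'a \<Rightarrow> real" +
  fixes \<phi> :: "'a \<Rightarrow> real \<Rightarrow> 'a"
  assumes cpt: "compact_space mtopology" and ne: "X \<noteq> {}" and flow: "is_flow X d \<phi>"
begin

lemma cont: "continuous_map (prod_topology mtopology euclideanreal) mtopology (\<lambda>(x,t). \<phi> x t)"
  using flow unfolding is_flow_def by blast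

lemma phi_in: "x \<in> X \<Longrightarrow> \<phi> x t \<in> X"
  using continuous_map_image_subset_topspace[OF cont] by auto

lemma phi_add: "x \<in> X \<Longrightarrow> \<phi> x (t + s) = \<phi> (\<phi> x s) t"
  using flow unfolding is_flow_def by blast

lemma phi_0: "x \<in> X \<Longrightarrow> \<phi> x 0 = x"
  using flow unfolding is_flow_def by blast

lemma bounded: obtains B where "\<And>x y. x \<in> X \<Longrightarrow> y \<in> X \<Longrightarrow> d x y \<le> B"
proof -
  have "mbounded X" using cpt compactin_imp_mbounded unfolding compact_space_def by simp
  then show ?thesis using that unfolding mbounded_alt by blast
qed

lemma bdd: "x \<in> X \<Longrightarrow> y \<in> X \<Longrightarrow> bdd_above ((\<lambda>s. d (\<phi> x s) (\<phi> y s)) ` S)"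
  by (rule bounded) (auto intro!: bdd_aboveI2 phi_in)

lemma bowen_ge: "x \<in> X \<Longrightarrow> y \<in> X \<Longrightarrow> s \<in> {0..t} \<Longrightarrow> d (\<phi> x s) (\<phi> y s) \<le> bowen_dist d \<phi> t x y"
  unfolding bowen_dist_def by (rule cSUP_upper[OF _ bdd])

lemma bowen_le: "0 \<le> t \<Longrightarrow> (\<And>s. s \<in> {0..t} \<Longrightarrow> d (\<phi> x s) (\<phi> y s) \<le> c) \<Longrightarrow> bowen_dist d \<phi> t x y \<le> c"
  unfolding bowen_dist_def by (rule cSUP_least) auto

lemma bowen_sym: "bowen_dist d \<phi> t x y = bowen_dist d \<phi> t y x"
  unfolding bowen_dist_def by (simp add: commute)

lemma bowen_self: "0 \<le> t \<Longrightarrow> x \<in> X \<Longrightarrow> bowen_dist d \<phi> t x x = 0"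
  unfolding bowen_dist_def using phi_in by simp

lemma finite_subcover:
  assumes "\<And>i. i \<in> I \<Longrightarrow> openin mtopology (B i)" "X \<subseteq> (\<Union>i\<in>I. B i)"
  obtains F where "F \<subseteq> I" "finite F" "X \<subseteq> (\<Union>i\<in>F. B i)"
proof -
  obtain \<F> where "finite \<F>" "\<F> \<subseteq> B ` I" "X \<subseteq> \<Union>\<F>"
    using cpt[unfolded compact_space_alt, rule_format, of "B ` I"] assms by auto
  then show ?thesis using that by (metis finite_subset_image)
qed

lemma local_cont:
  assumes y0: "y0 \<in> X" and e: "e > 0"
  shows "\<exists>\<delta>>0. \<exists>r>0. \<forall>y\<in>X. \<forall>s'. d y0 y < \<delta> \<longrightarrow> dist s s' < r \<longrightarrow> d (\<phi> y0 s) (\<phi> y s') < e"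
proof -
  define U where "U = {z \<in> topspace (prod_topology mtopology euclideanreal). (\<lambda>(x,t). \<phi> x t) z \<in> mball (\<phi> y0 s) e}"
  have op: "openin (prod_topology mtopology euclideanreal) U"
    unfolding U_def by (rule openin_continuous_map_preimage[OF cont]) simp
  have "\<phi> y0 s \<in> X" using y0 by (rule phi_in)
  then have "(y0, s) \<in> U" unfolding U_def using y0 e by simp
  then obtain V W where VW: "openin mtopology V" "openin euclideanreal W" "y0 \<in> V" "s \<in> W" "V \<times> W \<subseteq> U"
    using op[unfolded openin_prod_topology_alt, rule_format, OF \<open>(y0, s) \<in> U\<close>] by blast
  obtain \<delta> where \<delta>: "\<delta> > 0" "mball y0 \<delta> \<subseteq> V" using VW(1,3) unfolding openin_mtopology by blast
  have "open W" using VW(2) by simp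
  then obtain r where r: "r > 0" "ball s r \<subseteq> W" using VW(4) openE by blast
  have "\<forall>y\<in>X. \<forall>s'. d y0 y < \<delta> \<longrightarrow> dist s s' < r \<longrightarrow> d (\<phi> y0 s) (\<phi> y s') < e"
  proof (intro ballI allI impI)
    fix y s' assume "y \<in> X" "d y0 y < \<delta>" "dist s s' < r"
    then have "y \<in> V" "s' \<in> W" using \<delta> r y0 by auto
    then have "(y, s') \<in> U" using VW(5) by blast
    then show "d (\<phi> y0 s) (\<phi> y s') < e" unfolding U_def by simp
  qed
  then show ?thesis using \<delta>(1) r(1) by blast
qed

lemma equicont:
  assumes y0: "y0 \<in> X" and e: "e > 0" and K: "compact K"
  shows "\<exists>\<delta>>0. \<forall>y\<in>X. d y0 y < \<delta> \<longrightarrow> (\<forall>s\<in>K. d (\<phi> y0 s) (\<phi> y s) < e)"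
proof -
  have "\<forall>s. \<exists>\<delta>r. fst \<delta>r > 0 \<and> snd \<delta>r > 0 \<and> (\<forall>y\<in>X. \<forall>s'. d y0 y < fst \<delta>r \<longrightarrow> dist s s' < snd \<delta>r \<longrightarrow> d (\<phi> y0 s) (\<phi> y s') < e/2)"
  proof
    fix s
    have "e/2 > 0" using e by simp
    then obtain \<delta> r where "\<delta> > 0" "r > 0" "\<forall>y\<in>X. \<forall>s'. d y0 y < \<delta> \<longrightarrow> dist s s' < r \<longrightarrow> d (\<phi> y0 s) (\<phi> y s') < e/2"
      using local_cont[OF y0, of "e/2" s] by blast
    then show "\<exists>\<delta>r. fst \<delta>r > 0 \<and> snd \<delta>r > 0 \<and> (\<forall>y\<in>X. \<forall>s'. d y0 y < fst \<delta>r \<longrightarrow> dist s s' < snd \<delta>r \<longrightarrow> d (\<phi> y0 s) (\<phi> y s') < e/2)"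
      by (intro exI[of _ "(\<delta>, r)"]) simp
  qed
  then obtain g where "\<forall>s. fst (g s) > 0 \<and> snd (g s) > 0 \<and> (\<forall>y\<in>X. \<forall>s'. d y0 y < fst (g s) \<longrightarrow> dist s s' < snd (g s) \<longrightarrow> d (\<phi> y0 s) (\<phi> y s') < e/2)"
    by (rule choice[THEN exE]) blast
  then have g: "\<And>s. fst (g s) > 0" "\<And>s. snd (g s) > 0"
    "\<And>s y s'. y \<in> X \<Longrightarrow> d y0 y < fst (g s) \<Longrightarrow> dist s s' < snd (g s) \<Longrightarrow> d (\<phi> y0 s) (\<phi> y s') < e/2"
    by auto
  have cov: "K \<subseteq> (\<Union>c\<in>K. ball c (snd (g c)))" using g(2) by auto
  obtain C where C: "C \<subseteq> K" "finite C" "K \<subseteq> (\<Union>c\<in>C. ball c (snd (g c)))"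
    by (rule compactE_image[OF K _ cov]) auto
  define \<delta> where "\<delta> = Min (insert 1 ((\<lambda>c. fst (g c)) ` C))"
  have "\<delta> > 0" unfolding \<delta>_def using C(2) g(1) by (auto simp: Min_gr_iff)
  moreover have "\<forall>y\<in>X. d y0 y < \<delta> \<longrightarrow> (\<forall>s\<in>K. d (\<phi> y0 s) (\<phi> y s) < e)"
  proof (intro ballI impI)
    fix y s assume y: "y \<in> X" "d y0 y < \<delta>" and s: "s \<in> K"
    then obtain c where c: "c \<in> C" "dist c s < snd (g c)" using C by auto
    have "\<delta> \<le> fst (g c)" unfolding \<delta>_def using C c by (intro Min_le) auto
    then have 1: "d (\<phi> y0 c) (\<phi> y s) < e/2" using g(3)[OF y(1) _ c(2)] y by linarith
    have 2: "d (\<phi> y0 c) (\<phi> y0 s) < e/2" using g(3)[OF y0 _ c(2)] g(1) y0 by simp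
    have "d (\<phi> y0 s) (\<phi> y s) \<le> d (\<phi> y0 s) (\<phi> y0 c) + d (\<phi> y0 c) (\<phi> y s)"
      using triangle phi_in y y0 by blast
    then show "d (\<phi> y0 s) (\<phi> y s) < e" using 1 2 commute[of "\<phi> y0 c" "\<phi> y0 s"] by linarith
  qed
  ultimately show ?thesis by blast
qed

lemma bowen_ball_open:
  assumes x: "x \<in> X" and t: "0 \<le> t"
  shows "openin mtopology (bowen_ball X d \<phi> t x \<epsilon>)"
  unfolding openin_mtopology
proof (intro conjI allI impI)
  show "bowen_ball X d \<phi> t x \<epsilon> \<subseteq> X" unfolding bowen_ball_def by auto
  fix y0 assume "y0 \<in> bowen_ball X d \<phi> t x \<epsilon>"
  then have y0: "y0 \<in> X" and v: "bowen_dist d \<phi> t x y0 < \<epsilon>" unfolding bowen_ball_def by auto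
  define \<eta> where "\<eta> = \<epsilon> - bowen_dist d \<phi> t x y0"
  have "\<eta> > 0" using v \<eta>_def by simp
  then obtain \<delta> where \<delta>: "\<delta> > 0" "\<forall>y\<in>X. d y0 y < \<delta> \<longrightarrow> (\<forall>s\<in>{0..t}. d (\<phi> y0 s) (\<phi> y s) < \<eta>/2)"
    using equicont[OF y0 _ compact_Icc, of "\<eta>/2" 0 t] \<open>\<eta>>0\<close> half_gt_zero by blast
  show "\<exists>r>0. mball y0 r \<subseteq> bowen_ball X d \<phi> t x \<epsilon>"
  proof (intro exI conjI subsetI)
    fix y assume "y \<in> mball y0 \<delta>"
    then have y: "y \<in> X" "d y0 y < \<delta>" by auto
    have "bowen_dist d \<phi> t x y \<le> bowen_dist d \<phi> t x y0 + \<eta>/2"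
    proof (rule bowen_le[OF t])
      fix s assume s: "s \<in> {0..t}"
      have "d (\<phi> x s) (\<phi> y s) \<le> d (\<phi> x s) (\<phi> y0 s) + d (\<phi> y0 s) (\<phi> y s)"
        using triangle phi_in x y y0 by blast
      moreover have "d (\<phi> x s) (\<phi> y0 s) \<le> bowen_dist d \<phi> t x y0" by (rule bowen_ge[OF x y0 s])
      moreover have "d (\<phi> y0 s) (\<phi> y s) < \<eta>/2" using \<delta> y s by auto
      ultimately show "d (\<phi> x s) (\<phi> y s) \<le> bowen_dist d \<phi> t x y0 + \<eta>/2" by linarith
    qed
    then have "bowen_dist d \<phi> t x y < \<epsilon>" using \<eta>_def \<open>\<eta>>0\<close> by linarith
    then show "y \<in> bowen_ball X d \<phi> t x \<epsilon>" unfolding bowen_ball_def using y by auto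
  qed (use \<delta> in auto)
qed

definition spans where
  "spans t \<epsilon> E \<longleftrightarrow> finite E \<and> E \<subseteq> X \<and> (\<forall>x\<in>X. \<exists>y\<in>E. bowen_dist d \<phi> t x y < \<epsilon>)"

lemma span_num_eq: "span_num X d \<phi> t \<epsilon> = Inf {card E | E. spans t \<epsilon> E}"
  unfolding span_num_def spans_def by simp

lemma span_exists:
  assumes t: "0 \<le> t" and e: "0 < \<epsilon>"
  shows "\<exists>E. spans t \<epsilon> E"
proof -
  have cov: "X \<subseteq> (\<Union>y\<in>X. bowen_ball X d \<phi> t y \<epsilon>)"
    using bowen_self[OF t] e unfolding bowen_ball_def by auto
  obtain F where F: "F \<subseteq> X" "finite F" "X \<subseteq> (\<Union>y\<in>F. bowen_ball X d \<phi> t y \<epsilon>)"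
    by (rule finite_subcover[OF _ cov]) (auto intro: bowen_ball_open[OF _ t])
  have "\<forall>x\<in>X. \<exists>y\<in>F. bowen_dist d \<phi> t x y < \<epsilon>"
  proof
    fix x assume "x \<in> X"
    then obtain y where "y \<in> F" "x \<in> bowen_ball X d \<phi> t y \<epsilon>" using F by auto
    then show "\<exists>y\<in>F. bowen_dist d \<phi> t x y < \<epsilon>" unfolding bowen_ball_def using bowen_sym by auto
  qed
  then show ?thesis using F unfolding spans_def by blast
qed

lemma span_num_attained:
  assumes "0 \<le> t" "0 < \<epsilon>"
  obtains E where "spans t \<epsilon> E" "card E = span_num X d \<phi> t \<epsilon>"
proof -
  have "{card E | E. spans t \<epsilon> E} \<noteq> {}" using span_exists[OF assms] by blast
  then have "Inf {card E | E. spans t \<epsilon> E} \<in> {card E | E. spans t \<epsilon> E}" by (rule Inf_nat_def1)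
  then obtain E where "spans t \<epsilon> E" "card E = Inf {card E | E. spans t \<epsilon> E}" by auto
  then show ?thesis using that by (simp add: span_num_eq)
qed

lemma span_num_le: "spans t \<epsilon> E \<Longrightarrow> span_num X d \<phi> t \<epsilon> \<le> card E"
  unfolding span_num_eq by (rule cInf_lower) auto

lemma spans_card_pos: "spans t \<epsilon> E \<Longrightarrow> 0 < card E"
  unfolding spans_def using ne by (auto simp: card_gt_0_iff)

lemma span_num_pos: "0 \<le> t \<Longrightarrow> 0 < \<epsilon> \<Longrightarrow> 0 < span_num X d \<phi> t \<epsilon>"
  by (metis span_num_attained spans_card_pos)

lemma M_lam_zero:
  assumes e: "0 < \<epsilon>" and lam: "span_rate X d \<phi> \<epsilon> < ereal lam"
  shows "bowen_M_lam X \<phi> d X lam \<epsilon> = 0"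
proof -
  obtain l' where l': "span_rate X d \<phi> \<epsilon> < ereal l'" "l' < lam"
    using ereal_dense2[OF lam] by auto
  have "eventually (\<lambda>t. ereal (ln (real (span_num X d \<phi> t \<epsilon>)) / t) < ereal l') at_top"
    using Limsup_lessD[OF l'(1)[unfolded span_rate_def]] .
  then obtain T0 where T0: "\<And>t. t \<ge> T0 \<Longrightarrow> ln (real (span_num X d \<phi> t \<epsilon>)) / t < l'"
    unfolding eventually_at_top_linorder by auto
  have MN: "bowen_M_N X \<phi> d X lam N \<epsilon> = 0" for N
  proof -
    have key: "bowen_M_N X \<phi> d X lam N \<epsilon> \<le> 0 + ennreal e" if e0: "0 < e" for e
    proof -
      have "(\<lambda>n. exp (real n * (l' - lam))) \<longlonglongrightarrow> 0"
        using l'(2) by real_asymp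
      then have "eventually (\<lambda>n. exp (real n * (l' - lam)) < e) sequentially"
        using e0 by (rule order_tendstoD)
      moreover have "eventually (\<lambda>n. n \<ge> max (max N 1) (nat \<lceil>T0\<rceil>)) sequentially"
        by (rule eventually_ge_at_top)
      ultimately have "eventually (\<lambda>n. exp (real n * (l' - lam)) < e \<and> n \<ge> max (max N 1) (nat \<lceil>T0\<rceil>)) sequentially"
        by (rule eventually_conj)
      then obtain n where n0: "exp (real n * (l' - lam)) < e" "n \<ge> max (max N 1) (nat \<lceil>T0\<rceil>)"
        unfolding eventually_sequentially by blast
      have "real (nat \<lceil>T0\<rceil>) \<le> real n" using n0(2) by linarith
      then have "real n \<ge> T0" using real_nat_ceiling_ge[of T0] by linarith
      then have n: "exp (real n * (l' - lam)) < e" "n \<ge> N" "n \<ge> 1" "real n \<ge> T0" using n0 by auto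
      obtain E where E: "spans (real n) \<epsilon> E" "card E = span_num X d \<phi> (real n) \<epsilon>"
        using span_num_attained[OF of_nat_0_le_iff e] by blast
      have cpos: "0 < card E" using spans_card_pos[OF E(1)] .
      have "ln (real (card E)) / real n < l'" using T0[OF n(4)] E(2) by simp
      then have "ln (real (card E)) < real n * l'" using n(3) by (simp add: divide_less_eq mult.commute)
      then have cardE: "real (card E) < exp (real n * l')"
        using cpos by (metis exp_less_mono exp_ln of_nat_0_less_iff)
      obtain h where h: "bij_betw h {0..<card E} E" using ex_bij_betw_nat_finite E(1) unfolding spans_def by blast
      have mem: "({0..<card E}, h, \<lambda>_. n) \<in> {(I :: nat set, x :: nat \<Rightarrow> 'a, m :: nat \<Rightarrow> nat).
          (\<forall>i\<in>I. x i \<in> X \<and> m i \<ge> N) \<and> X \<subseteq> (\<Union>i\<in>I. bowen_ball X d \<phi> (real (m i)) (x i) \<epsilon>)}"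
      proof (simp, intro conjI ballI subsetI)
        fix i assume "i \<in> {0..<card E}"
        then show "h i \<in> X" using h E(1) unfolding spans_def bij_betw_def by auto
      next
        fix x assume "x \<in> X"
        then obtain y where y: "y \<in> E" "bowen_dist d \<phi> (real n) x y < \<epsilon>" using E(1) unfolding spans_def by auto
        have "y \<in> h ` {0..<card E}" using h y(1) by (simp add: bij_betw_def)
        then obtain i where "i \<in> {0..<card E}" "h i = y" by blast
        then show "x \<in> (\<Union>i\<in>{0..<card E}. bowen_ball X d \<phi> (real n) (h i) \<epsilon>)"
          unfolding bowen_ball_def using y \<open>x \<in> X\<close> bowen_sym by auto
      qed (use n in auto)
      have "bowen_M_N X \<phi> d X lam N \<epsilon> \<le> infsum (\<lambda>i. ennreal (exp (- real n * lam))) {0..<card E}"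
        unfolding bowen_M_N_def by (rule INF_lower2[OF mem]) (simp only: prod.case order_refl)
      also have "\<dots> = ennreal (real (card E) * exp (- real n * lam))"
        by (simp add: ennreal_mult' ennreal_of_nat_eq_real_of_nat)
      also have "\<dots> \<le> ennreal (exp (real n * l') * exp (- real n * lam))"
        using cardE by (intro ennreal_leI mult_right_mono) auto
      also have "exp (real n * l') * exp (- real n * lam) = exp (real n * (l' - lam))"
        by (simp add: exp_add[symmetric] algebra_simps)
      also have "ennreal \<dots> \<le> ennreal e" using n(1) by (intro ennreal_leI) simp
      finally show ?thesis by simp
    qed
    have "bowen_M_N X \<phi> d X lam N \<epsilon> \<le> 0"
    proof (rule ennreal_le_epsilon)
      fix e :: real assume "0 < e"
      then show "bowen_M_N X \<phi> d X lam N \<epsilon> \<le> 0 + ennreal e" by (rule key)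
    qed
    then show ?thesis by simp
  qed
  show ?thesis unfolding bowen_M_lam_def MN by simp
qed

lemma part_A:
  assumes e: "0 < \<epsilon>"
  shows "bowen_M X \<phi> d X \<epsilon> \<le> span_rate X d \<phi> \<epsilon>"
proof (rule ccontr)
  assume "\<not> ?thesis"
  then obtain z where z: "span_rate X d \<phi> \<epsilon> < ereal z" "ereal z < bowen_M X \<phi> d X \<epsilon>"
    using ereal_dense2 by (meson not_le)
  have "bowen_M X \<phi> d X \<epsilon> \<le> ereal z"
    unfolding bowen_M_def using M_lam_zero[OF e z(1)] by (intro Inf_lower) blast
  then show False using z(2) by simp
qed

lemma span_bound:
  fixes F :: "nat set" and x :: "nat \<Rightarrow> 'a" and n :: "nat \<Rightarrow> nat"
  assumes F: "finite F" and xF: "\<And>i. i \<in> F \<Longrightarrow> x i \<in> X" and nF: "\<And>i. i \<in> F \<Longrightarrow> n i \<ge> 1"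
    and cov: "X \<subseteq> (\<Union>i\<in>F. bowen_ball X d \<phi> (real (n i)) (x i) \<epsilon>)"
    and lam: "0 \<le> lam" and S: "(\<Sum>i\<in>F. exp (- real (n i) * lam)) \<le> 1" and T: "0 < T" and e: "0 < \<epsilon>"
  shows "real (span_num X d \<phi> T (3*\<epsilon>)) \<le> (T + 2) * exp ((T + real (Max (n ` F))) * lam)"
proof -
  define B where "B i = bowen_ball X d \<phi> (real (n i)) (x i) \<epsilon>" for i
  define c where "c y = (SOME i. i \<in> F \<and> y \<in> B i)" for y
  have c: "c y \<in> F \<and> y \<in> B (c y)" if "y \<in> X" for y
  proof -
    from that cov obtain i where "i \<in> F \<and> y \<in> B i" unfolding B_def by blast
    then show ?thesis unfolding c_def by (rule someI)
  qed
  define step where "step z = \<phi> z (real (n (c z)))" for z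
  define orb where "orb y k = (step ^^ k) y" for y k
  define tm where "tm y k = (\<Sum>j<k. n (c (orb y j)))" for y k
  have orb_Suc: "orb y (Suc k) = step (orb y k)" for y k by (simp add: orb_def)
  have orb_0: "orb y 0 = y" for y by (simp add: orb_def)
  have tm_Suc: "tm y (Suc k) = tm y k + n (c (orb y k))" for y k by (simp add: tm_def)
  have tm_0: "tm y 0 = 0" for y by (simp add: tm_def)
  have orb_in: "orb y k \<in> X" if "y \<in> X" for y k
  proof (induction k)
    case 0 then show ?case using that by (simp add: orb_0)
  next
    case (Suc k) then show ?case unfolding orb_Suc step_def by (rule phi_in)
  qed
  have orb_eq: "orb y k = \<phi> y (real (tm y k))" if y: "y \<in> X" for y k
  proof (induction k)
    case 0 then show ?case using y by (simp add: orb_0 tm_0 phi_0)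
  next
    case (Suc k)
    have "orb y (Suc k) = \<phi> (\<phi> y (real (tm y k))) (real (n (c (orb y k))))"
      unfolding orb_Suc step_def Suc by simp
    also have "\<dots> = \<phi> y (real (n (c (orb y k))) + real (tm y k))" using phi_add[OF y] by simp
    also have "\<dots> = \<phi> y (real (tm y (Suc k)))" by (simp add: tm_Suc add.commute)
    finally show ?case .
  qed
  have tm_ge: "k \<le> tm y k" if y: "y \<in> X" for y k
  proof -
    have "(\<Sum>j<k. (1::nat)) \<le> tm y k" unfolding tm_def
      by (intro sum_mono nF) (use c[OF orb_in[OF y]] in auto)
    then show ?thesis by simp
  qed
  define Kmax where "Kmax = nat \<lceil>T\<rceil>"
  define K where "K y = (LEAST k. T \<le> real (tm y k))" for y
  have K1: "T \<le> real (tm y (K y)) \<and> K y \<le> Kmax" if y: "y \<in> X" for y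
  proof -
    have "T \<le> real Kmax" unfolding Kmax_def by (rule real_nat_ceiling_ge)
    also have "\<dots> \<le> real (tm y Kmax)" using tm_ge[OF y] by simp
    finally have ex: "T \<le> real (tm y Kmax)" .
    show ?thesis unfolding K_def using LeastI[of "\<lambda>k. T \<le> real (tm y k)", OF ex] Least_le[of "\<lambda>k. T \<le> real (tm y k)", OF ex] by simp
  qed
  have K2: "real (tm y k) < T" if "k < K y" for y k
    using not_less_Least[OF that[unfolded K_def]] by simp
  have Kpos: "0 < K y" if y: "y \<in> X" for y
  proof (rule ccontr)
    assume "\<not> 0 < K y"
    then have "K y = 0" by simp
    then show False using K1[OF y] T by (simp add: tm_0)
  qed
  define Nm where "Nm = Max (n ` F)"
  have nle: "n i \<le> Nm" if "i \<in> F" for i unfolding Nm_def using F that by simp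
  define word where "word y = map (\<lambda>j. c (orb y j)) [0..<K y]" for y
  define L where "L = T + real Nm"
  define W where "W k = {w. set w \<subseteq> F \<and> length w = k \<and> real (sum_list (map n w)) \<le> L}" for k
  have word_sum: "sum_list (map n (word y)) = tm y (K y)" for y
    unfolding word_def tm_def by (simp add: interv_sum_list_conv_sum_set_nat atLeast0LessThan)
  have word_in: "word y \<in> (\<Union>k\<le>Kmax. W k)" if y: "y \<in> X" for y
  proof -
    have "set (word y) \<subseteq> F" unfolding word_def using c[OF orb_in[OF y]] by auto
    moreover have "length (word y) = K y" unfolding word_def by simp
    moreover have "real (tm y (K y)) \<le> L"
    proof -
      obtain k' where k': "K y = Suc k'" using Kpos[OF y] gr0_implies_Suc by blast
      have "real (tm y k') < T" using K2[of k' y] k' by simp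
      moreover have "n (c (orb y k')) \<le> Nm" using nle c[OF orb_in[OF y]] by blast
      ultimately show ?thesis unfolding L_def k' tm_Suc by simp
    qed
    ultimately show ?thesis unfolding W_def using K1[OF y] word_sum[of y] by auto
  qed
  have close: "bowen_dist d \<phi> T y y' < 3 * \<epsilon>" if y: "y \<in> X" and y': "y' \<in> X" and w: "word y = word y'" for y y'
  proof -
    have KK: "K y' = K y" using arg_cong[OF w, of length] unfolding word_def by simp
    have cj: "c (orb y j) = c (orb y' j)" if "j < K y" for j
    proof -
      have "map (\<lambda>j. c (orb y j)) [0..<K y] = map (\<lambda>j. c (orb y' j)) [0..<K y]"
        using w unfolding word_def KK .
      then show ?thesis using that by (simp add: map_eq_conv)
    qed
    have tmj: "tm y j = tm y' j" if "j \<le> K y" for j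
      unfolding tm_def using that cj by (intro sum.cong) auto
    have "bowen_dist d \<phi> T y y' \<le> 2 * \<epsilon>"
    proof (rule bowen_le)
      show "0 \<le> T" using T by simp
      fix s assume s: "s \<in> {0..T}"
      have "\<exists>j<K y. real (tm y j) \<le> s \<and> s \<le> real (tm y (Suc j))"
        using K1[OF y] s Kpos[OF y] by (intro interval_find) (auto simp: tm_0)
      then obtain j where j: "j < K y" "real (tm y j) \<le> s" "s \<le> real (tm y (Suc j))" by blast
      define i where "i = c (orb y j)"
      have i': "i = c (orb y' j)" unfolding i_def using cj[OF j(1)] .
      define u where "u = s - real (tm y j)"
      have u: "u \<in> {0..real (n i)}" using j unfolding u_def i_def tm_Suc by auto
      have e1: "\<phi> y s = \<phi> (orb y j) u"
        using phi_add[OF y, of u "real (tm y j)"] orb_eq[OF y, of j] unfolding u_def by simp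
      have e2: "\<phi> y' s = \<phi> (orb y' j) u"
        using phi_add[OF y', of u "real (tm y' j)"] orb_eq[OF y', of j] tmj[of j] j(1) unfolding u_def by simp
      have iF: "i \<in> F" and b1: "orb y j \<in> B i" using c[OF orb_in[OF y, of j]] unfolding i_def by auto
      have b2: "orb y' j \<in> B i" using c[OF orb_in[OF y', of j]] unfolding i' by auto
      have d1: "d (\<phi> (x i) u) (\<phi> (orb y j) u) < \<epsilon>"
        using bowen_ge[OF xF[OF iF] orb_in[OF y, of j] u] b1 unfolding B_def bowen_ball_def by simp
      have d2: "d (\<phi> (x i) u) (\<phi> (orb y' j) u) < \<epsilon>"
        using bowen_ge[OF xF[OF iF] orb_in[OF y', of j] u] b2 unfolding B_def bowen_ball_def by simp
      have "d (\<phi> (orb y j) u) (\<phi> (orb y' j) u) \<le> d (\<phi> (orb y j) u) (\<phi> (x i) u) + d (\<phi> (x i) u) (\<phi> (orb y' j) u)"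
        by (rule triangle) (simp_all add: phi_in orb_in y y' xF iF)
      then show "d (\<phi> y s) (\<phi> y' s) \<le> 2 * \<epsilon>" unfolding e1 e2 using d1 d2 commute[of "\<phi> (orb y j) u" "\<phi> (x i) u"] by linarith
    qed
    then show ?thesis using e by linarith
  qed
  define rep where "rep w = (SOME y. y \<in> X \<and> word y = w)" for w
  have rep: "rep (word y) \<in> X \<and> word (rep (word y)) = word y" if "y \<in> X" for y
    unfolding rep_def by (rule someI[of _ y]) (use that in simp)
  define E where "E = rep ` word ` X"
  have finW: "finite (\<Union>k\<le>Kmax. W k)"
  proof (intro finite_UN_I finite_atMost)
    fix k
    have "W k \<subseteq> {w. set w \<subseteq> F \<and> length w = k}" unfolding W_def by auto
    then show "finite (W k)" using finite_lists_length_eq[OF F] finite_subset by blast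
  qed
  have wsub: "word ` X \<subseteq> (\<Union>k\<le>Kmax. W k)" using word_in by blast
  have sp: "spans T (3*\<epsilon>) E"
    unfolding spans_def
  proof (intro conjI ballI)
    show "finite E" unfolding E_def using finite_subset[OF wsub finW] by blast
    show "E \<subseteq> X" unfolding E_def using rep by blast
    fix y assume y: "y \<in> X"
    show "\<exists>y'\<in>E. bowen_dist d \<phi> T y y' < 3 * \<epsilon>"
      using close[OF y, of "rep (word y)"] rep[OF y] y unfolding E_def by auto
  qed
  have "card E \<le> card (word ` X)" unfolding E_def by (rule card_image_le[OF finite_subset[OF wsub finW]])
  also have "\<dots> \<le> card (\<Union>k\<le>Kmax. W k)" by (rule card_mono[OF finW wsub])
  also have "\<dots> \<le> (\<Sum>k\<le>Kmax. card (W k))" by (rule card_UN_le) simp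
  finally have "real (card E) \<le> (\<Sum>k\<le>Kmax. real (card (W k)))" by (metis of_nat_le_iff of_nat_sum)
  also have "\<dots> \<le> (\<Sum>k\<le>Kmax. exp (L * lam))"
    by (intro sum_mono) (unfold W_def, rule count_words[OF F lam S])
  also have "\<dots> = (real Kmax + 1) * exp (L * lam)" by simp
  also have "\<dots> \<le> (T + 2) * exp (L * lam)"
  proof -
    have "real Kmax \<le> T + 1" unfolding Kmax_def using T by linarith
    then show ?thesis by (intro mult_right_mono) auto
  qed
  finally have "real (card E) \<le> (T + 2) * exp (L * lam)" .
  moreover have "span_num X d \<phi> T (3*\<epsilon>) \<le> card E" by (rule span_num_le[OF sp])
  ultimately show ?thesis unfolding L_def Nm_def by linarith
qed

lemma M_N_mono:
  assumes "N \<le> N'"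
  shows "bowen_M_N X \<phi> d Z lam N \<epsilon> \<le> bowen_M_N X \<phi> d Z lam N' \<epsilon>"
  unfolding bowen_M_N_def
proof (rule INF_superset_mono)
  show "{(I, x, n). (\<forall>i\<in>I. x i \<in> X \<and> N' \<le> n i) \<and> Z \<subseteq> (\<Union>i\<in>I. bowen_ball X d \<phi> (real (n i)) (x i) \<epsilon>)}
     \<subseteq> {(I, x, n). (\<forall>i\<in>I. x i \<in> X \<and> N \<le> n i) \<and> Z \<subseteq> (\<Union>i\<in>I. bowen_ball X d \<phi> (real (n i)) (x i) \<epsilon>)}"
    using assms by (auto intro: order_trans)
qed simp

lemma M_N_le: "bowen_M_N X \<phi> d Z lam N \<epsilon> \<le> bowen_M_lam X \<phi> d Z lam \<epsilon>"
proof -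
  have "incseq (\<lambda>N. bowen_M_N X \<phi> d Z lam N \<epsilon>)" unfolding incseq_def using M_N_mono by blast
  then have "(\<lambda>N. bowen_M_N X \<phi> d Z lam N \<epsilon>) \<longlonglongrightarrow> (SUP N. bowen_M_N X \<phi> d Z lam N \<epsilon>)" by (rule LIMSEQ_SUP)
  then have "bowen_M_lam X \<phi> d Z lam \<epsilon> = (SUP N. bowen_M_N X \<phi> d Z lam N \<epsilon>)" unfolding bowen_M_lam_def by (rule limI)
  then show ?thesis using SUP_upper[of N UNIV "\<lambda>N. bowen_M_N X \<phi> d Z lam N \<epsilon>"] by simp
qed

lemma part_B_lam:
  assumes e: "0 < \<epsilon>" and z: "bowen_M_lam X \<phi> d X lam \<epsilon> = 0"
  shows "span_rate X d \<phi> (3*\<epsilon>) \<le> ereal lam"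
proof -
  have "bowen_M_N X \<phi> d X lam 1 \<epsilon> = 0" using M_N_le[of X lam 1 \<epsilon>] z by simp
  then have "bowen_M_N X \<phi> d X lam 1 \<epsilon> < 1" by simp
  then obtain p where p: "p \<in> {(I :: nat set, x :: nat \<Rightarrow> 'a, n :: nat \<Rightarrow> nat).
          (\<forall>i\<in>I. x i \<in> X \<and> n i \<ge> 1) \<and> X \<subseteq> (\<Union>i\<in>I. bowen_ball X d \<phi> (real (n i)) (x i) \<epsilon>)}"
     and p2: "(case p of (I, x, n) \<Rightarrow> infsum (\<lambda>i. ennreal (exp (- real (n i) * lam))) I) < 1"
    unfolding bowen_M_N_def INF_less_iff by blast
  obtain I x n where pe: "p = (I, x, n)" by (rule prod_cases3)
  have I1: "\<And>i. i \<in> I \<Longrightarrow> x i \<in> X \<and> n i \<ge> 1" and Icov: "X \<subseteq> (\<Union>i\<in>I. bowen_ball X d \<phi> (real (n i)) (x i) \<epsilon>)"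
    using p unfolding pe by auto
  have Isum: "infsum (\<lambda>i. ennreal (exp (- real (n i) * lam))) I < 1" using p2 unfolding pe by simp
  obtain F where F: "F \<subseteq> I" "finite F" "X \<subseteq> (\<Union>i\<in>F. bowen_ball X d \<phi> (real (n i)) (x i) \<epsilon>)"
  proof (rule finite_subcover[OF _ Icov])
    fix i assume "i \<in> I"
    then show "openin mtopology (bowen_ball X d \<phi> (real (n i)) (x i) \<epsilon>)"
      using I1 by (intro bowen_ball_open) auto
  qed
  have "(\<Sum>i\<in>F. ennreal (exp (- real (n i) * lam))) = infsum (\<lambda>i. ennreal (exp (- real (n i) * lam))) F"
    using F(2) by simp
  also have "\<dots> \<le> infsum (\<lambda>i. ennreal (exp (- real (n i) * lam))) I"
    by (rule infsum_mono_neutral[OF nonneg_summable_on_complete nonneg_summable_on_complete]) (use F(1) in auto)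
  finally have le: "(\<Sum>i\<in>F. ennreal (exp (- real (n i) * lam))) \<le> infsum (\<lambda>i. ennreal (exp (- real (n i) * lam))) I" .
  have eq: "ennreal (\<Sum>i\<in>F. exp (- real (n i) * lam)) = (\<Sum>i\<in>F. ennreal (exp (- real (n i) * lam)))"
    by (rule sum_ennreal[symmetric]) simp
  have "ennreal (\<Sum>i\<in>F. exp (- real (n i) * lam)) < 1" unfolding eq by (rule order_le_less_trans[OF le Isum])
  then have S: "(\<Sum>i\<in>F. exp (- real (n i) * lam)) < 1" by (simp only: ennreal_less_one_iff)
  have Fne: "F \<noteq> {}" using F(3) ne by auto
  have lam: "0 \<le> lam"
  proof (rule ccontr)
    assume "\<not> 0 \<le> lam"
    then have "\<And>i. i \<in> F \<Longrightarrow> 1 \<le> exp (- real (n i) * lam)" by (simp add: mult_nonneg_nonpos)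
    then have "(\<Sum>i\<in>F. (1::real)) \<le> (\<Sum>i\<in>F. exp (- real (n i) * lam))" by (rule sum_mono)
    moreover have "1 \<le> card F" using Fne F(2) by (simp add: Suc_le_eq card_gt_0_iff)
    ultimately show False using S by simp
  qed
  define Nm where "Nm = real (Max (n ` F))"
  have bound: "real (span_num X d \<phi> T (3*\<epsilon>)) \<le> (T + 2) * exp ((T + Nm) * lam)" if "0 < T" for T
    unfolding Nm_def
    by (rule span_bound[OF F(2) _ _ F(3) lam _ that e]) (use I1 F(1) S in auto)
  define g where "g T = ln (T + 2) / T + lam + Nm * lam / T" for T
  have ev: "eventually (\<lambda>T. ereal (ln (real (span_num X d \<phi> T (3*\<epsilon>))) / T) \<le> ereal (g T)) at_top"
    using eventually_gt_at_top[of 0]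
  proof eventually_elim
    case (elim T)
    have pos: "0 < real (span_num X d \<phi> T (3*\<epsilon>))" using span_num_pos[of T "3*\<epsilon>"] elim e by simp
    have "ln (real (span_num X d \<phi> T (3*\<epsilon>))) \<le> ln ((T + 2) * exp ((T + Nm) * lam))"
      using bound[OF elim] pos by (subst ln_le_cancel_iff) auto
    also have "\<dots> = ln (T + 2) + (T + Nm) * lam" using elim by (simp add: ln_mult)
    finally have "ln (real (span_num X d \<phi> T (3*\<epsilon>))) / T \<le> (ln (T + 2) + (T + Nm) * lam) / T"
      using elim by (intro divide_right_mono) auto
    also have "\<dots> = g T" unfolding g_def using elim by (simp add: field_simps)
    finally show ?case by simp
  qed
  have lim: "(g \<longlongrightarrow> lam) at_top" unfolding g_def by real_asymp
  have "span_rate X d \<phi> (3*\<epsilon>) \<le> Limsup at_top (\<lambda>T. ereal (g T))"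
    unfolding span_rate_def by (rule Limsup_mono[OF ev])
  also have "\<dots> = ereal lam" by (rule lim_imp_Limsup) (use lim in auto)
  finally show ?thesis .
qed

lemma part_B:
  assumes e: "0 < \<epsilon>"
  shows "span_rate X d \<phi> (3*\<epsilon>) \<le> bowen_M X \<phi> d X \<epsilon>"
  unfolding bowen_M_def
  by (rule Inf_greatest) (auto intro: part_B_lam[OF e])

lemma bowen_M_nonneg:
  assumes e: "0 < \<epsilon>"
  shows "0 \<le> bowen_M X \<phi> d X \<epsilon>"
  unfolding bowen_M_def
proof (rule Inf_greatest)
  fix z assume "z \<in> {ereal lam |lam. bowen_M_lam X \<phi> d X lam \<epsilon> = 0}"
  then obtain lam where z: "z = ereal lam" and M0: "bowen_M_lam X \<phi> d X lam \<epsilon> = 0" by auto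
  have r1: "span_rate X d \<phi> (3*\<epsilon>) \<le> ereal lam" using part_B_lam[OF e M0] .
  have r0: "0 \<le> span_rate X d \<phi> (3*\<epsilon>)"
  proof -
    have ev0: "eventually (\<lambda>t. ereal 0 \<le> ereal (ln (real (span_num X d \<phi> t (3*\<epsilon>))) / t)) at_top"
      using eventually_gt_at_top[of 0]
    proof eventually_elim
      case (elim t)
      have "1 \<le> real (span_num X d \<phi> t (3*\<epsilon>))" using span_num_pos[of t "3*\<epsilon>"] elim e by simp
      then show ?case using elim by simp
    qed
    have "ereal 0 \<le> span_rate X d \<phi> (3*\<epsilon>)"
      unfolding span_rate_def by (rule le_Limsup[OF _ ev0]) simp
    then show ?thesis by (simp add: zero_ereal_def)
  qed
  show "0 \<le> z" unfolding z by (rule order_trans[OF r0 r1])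
qed

end

lemma ereal_div_aux:
  fixes M :: ereal
  assumes "0 \<le> M" "0 < a" "0 < b" "b \<le> c * a"
  shows "M / ereal a \<le> ereal c * (M / ereal b)"
proof (cases M)
  case (real m)
  have c: "0 < c" using assms by (metis mult_le_0_iff not_le order.strict_trans2 less_le_not_le)
  have "m / a \<le> c * (m / b)"
  proof -
    have "m * b \<le> m * (c * a)" using assms real by (intro mult_left_mono) auto
    then show ?thesis using assms by (simp add: field_simps)
  qed
  then show ?thesis using real assms by simp
next
  case PInf
  have c: "0 < c" using assms by (metis mult_le_0_iff not_le order.strict_trans2 less_le_not_le)
  then show ?thesis using PInf assms by simp
next
  case MInf then show ?thesis using assms by simp
qed

lemma limsup_combine:
  fixes R Mb :: "real \<Rightarrow> ereal"
  assumes A: "\<And>\<epsilon>. 0 < \<epsilon> \<Longrightarrow> Mb \<epsilon> \<le> R \<epsilon>" and B: "\<And>\<epsilon>. 0 < \<epsilon> \<Longrightarrow> R (3*\<epsilon>) \<le> Mb \<epsilon>"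
    and Mnn: "\<And>\<epsilon>. 0 < \<epsilon> \<Longrightarrow> 0 \<le> Mb \<epsilon>"
  shows "Limsup (at_right 0) (\<lambda>\<epsilon>. R \<epsilon> / ereal (ln (1/\<epsilon>))) = Limsup (at_right 0) (\<lambda>\<epsilon>. Mb \<epsilon> / ereal (ln (1/\<epsilon>)))"
proof -
  define f where "f \<epsilon> = R \<epsilon> / ereal (ln (1/\<epsilon>))" for \<epsilon>
  define g where "g \<epsilon> = Mb \<epsilon> / ereal (ln (1/\<epsilon>))" for \<epsilon>
  have nb: "at_right (0::real) \<noteq> bot" using trivial_limit_at_right_real[of "0::real"] by (simp add: trivial_limit_def)
  have ev01: "eventually (\<lambda>\<epsilon>. \<epsilon> \<in> {0<..<1}) (at_right (0::real))" by (rule eventually_at_right_real) simp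
  have ge: "Limsup (at_right 0) g \<le> Limsup (at_right 0) f"
  proof (rule Limsup_mono)
    show "eventually (\<lambda>\<epsilon>. g \<epsilon> \<le> f \<epsilon>) (at_right 0)"
      using ev01
    proof eventually_elim
      case (elim \<epsilon>)
      then have "0 < ln (1/\<epsilon>)" by simp
      then show ?case unfolding f_def g_def using A[of \<epsilon>] elim by (intro ereal_divide_right_mono) auto
    qed
  qed
  have LB0: "0 \<le> Limsup (at_right 0) g"
  proof (rule le_Limsup[OF nb])
    show "eventually (\<lambda>\<epsilon>. 0 \<le> g \<epsilon>) (at_right 0)"
      using ev01
    proof eventually_elim
      case (elim \<epsilon>)
      then have "0 < ln (1/\<epsilon>)" by simp
      then have "0 / ereal (ln (1/\<epsilon>)) \<le> g \<epsilon>" unfolding g_def using Mnn[of \<epsilon>] elim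
        by (intro ereal_divide_right_mono) auto
      then show ?case by simp
    qed
  qed
  have fm: "filtermap ((*) 3) (at_right 0) = at_right (0::real)"
    using filtermap_times_pos_at_right[of "3::real" 0] by simp
  have injm: "inj ((*) (3::real))" by (auto simp: inj_def)
  have shift: "Limsup (at_right 0) f = Limsup (at_right 0) (\<lambda>\<epsilon>. f (3*\<epsilon>))"
    using Limsup_filtermap_eq[OF injm, of "at_right 0" f] unfolding fm by simp
  have key: "Limsup (at_right 0) f \<le> ereal c * Limsup (at_right 0) g" if c: "1 < c" for c
  proof -
    define \<delta> where "\<delta> = min (1/3) (exp (- (c * ln 3 / (c - 1))))"
    have \<delta>: "0 < \<delta>" unfolding \<delta>_def by simp
    have ev: "eventually (\<lambda>\<epsilon>. \<epsilon> \<in> {0<..<\<delta>}) (at_right (0::real))" by (rule eventually_at_right_real[OF \<delta>])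
    have "eventually (\<lambda>\<epsilon>. f (3*\<epsilon>) \<le> ereal c * g \<epsilon>) (at_right 0)"
      using ev
    proof eventually_elim
      case (elim \<epsilon>)
      then have e0: "0 < \<epsilon>" and e3: "3 * \<epsilon> < 1" and e4: "\<epsilon> < exp (- (c * ln 3 / (c - 1)))"
        unfolding \<delta>_def by auto
      have a: "0 < ln (1/(3*\<epsilon>))" using e0 e3 by simp
      have b: "0 < ln (1/\<epsilon>)" using e0 e3 by simp
      have lne: "ln \<epsilon> < - (c * ln 3 / (c - 1))" using e4 e0 by (metis ln_exp ln_less_cancel_iff exp_gt_zero)
      have l3: "ln (1/(3*\<epsilon>)) = - ln 3 - ln \<epsilon>" using e0 by (simp add: ln_div ln_mult)
      have l1: "ln (1/\<epsilon>) = - ln \<epsilon>" using e0 by (simp add: ln_div)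
      have "c * ln 3 / (c - 1) < - ln \<epsilon>" using lne by simp
      then have "c * ln 3 < (c - 1) * (- ln \<epsilon>)" using c by (simp add: field_simps)
      then have ba: "ln (1/\<epsilon>) \<le> c * ln (1/(3*\<epsilon>))" unfolding l3 l1 by (simp add: algebra_simps)
      have "f (3*\<epsilon>) \<le> Mb \<epsilon> / ereal (ln (1/(3*\<epsilon>)))"
        unfolding f_def using B[OF e0] a by (intro ereal_divide_right_mono) auto
      also have "\<dots> \<le> ereal c * g \<epsilon>" unfolding g_def by (rule ereal_div_aux[OF Mnn[OF e0] a b ba])
      finally show ?case .
    qed
    then have "Limsup (at_right 0) (\<lambda>\<epsilon>. f (3*\<epsilon>)) \<le> Limsup (at_right 0) (\<lambda>\<epsilon>. ereal c * g \<epsilon>)"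
      by (rule Limsup_mono)
    also have "\<dots> = ereal c * Limsup (at_right 0) g" by (rule Limsup_ereal_mult_left[OF nb]) (use c in simp)
    finally show ?thesis unfolding shift .
  qed
  have le: "Limsup (at_right 0) f \<le> Limsup (at_right 0) g"
  proof (cases "Limsup (at_right 0) g")
    case (real b)
    have "b \<ge> 0" using LB0 real by simp
    show ?thesis
    proof (rule ereal_le_epsilon2)
      fix e :: real assume e: "0 < e"
      define c where "c = 1 + e / (b + 1)"
      have c1: "1 < c" unfolding c_def using e \<open>b \<ge> 0\<close> by simp
      have "c * b \<le> b + e"
      proof -
        have "e / (b + 1) * b \<le> e" using e \<open>b \<ge> 0\<close> by (simp add: field_simps)
        then show ?thesis unfolding c_def by (simp add: algebra_simps)
      qed
      then have "ereal (c * b) \<le> ereal (b + e)" by simp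
      then have "Limsup (at_right 0) f \<le> ereal (b + e)" using key[OF c1] real by (simp del: ereal_less_eq)
      then show "Limsup (at_right 0) f \<le> Limsup (at_right 0) g + ereal e"
        using real by simp
    qed
  next
    case PInf then show ?thesis by simp
  next
    case MInf then show ?thesis using LB0 by simp
  qed
  show ?thesis using ge le unfolding f_def g_def by (rule antisym[rotated])
qed

theorem proposition2p12:
  fixes X :: "'a set" and d :: "'a \<Rightarrow> 'a \<Rightarrow> real" and \<phi> :: "'a \<Rightarrow> real \<Rightarrow> 'a"
  assumes "Metric_space X d"
    and "compact_space (Metric_space.mtopology X d)"
    and "X \<noteq> {}"
    and "is_flow X d \<phi>"
  shows "upper_mdim_M \<phi> X d = upper_mdim_B X \<phi> X d"
proof -
  interpret C: cflow X d \<phi>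
    using assms by (simp add: cflow_def cflow_axioms_def)
  show ?thesis
    unfolding upper_mdim_M_def upper_mdim_B_def
    by (rule limsup_combine) (auto intro: C.part_A C.part_B C.bowen_M_nonneg)
qed

end
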